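(* Let $n \geq 1$. There is no closed $(n+1)$-dimensional manifold $M$ carrying a complete affine structure whose holonomy group $\mathrm{hol}(\pi_1(M)) \leq \mathrm{Aff}(n+1,\mathbb{R})$ is contained in the group $G$ of affine automorphisms of $\mathbb{A}^{n+1}$ preserving a fixed affine line $l \subset \mathbb{A}^{n+1}$. After choosing coordinates $\mathbb{A}^{n+1}\cong\mathbb{R}\times\mathbb{R}^n$ in which $l=\mathbb{R}\times\{0\}$, this group is $$G=\left\{ x\mapsto \begin{pmatrix} r & w\\ 0 & A\end{pmatrix}x+\begin{pmatrix} d\\ 0\end{pmatrix} \;:\; r\neq 0,\ d\in\mathbb{R},\ w^{T}\in\mathbb{R}^n,\ A\in \mathrm{GL}(n,\mathbb{R})\right\}.$$
   Context: An $m$-dimensional affine manifold is a smooth $m$-manifold $M$ with an atlas of charts $\Phi_\alpha:U_\alpha\to\mathbb{A}^m$ (diffeomorphisms onto open subsets of affine space) such that on each connected component of each overlap $U_\alpha\cap U_\beta$ the transition map $\Phi_\beta\circ\Phi_\alpha^{-1}$ is the restriction of an affine automorphism of $\mathbb{A}^m$. Such a structure determines a developing pair $(\mathrm{dev},\mathrm{hol})$: a local diffeomorphism $\mathrm{dev}:\widetilde M\to\mathbb{A}^m$ from the universal cover, obtained by analytically continuing a chart along paths, and a homomorphism $\mathrm{hol}:\Gamma=\pi_1(M,p)\to\mathrm{Aff}(m,\mathbb{R})$ (the holonomy) such that $\mathrm{dev}\circ\gamma=\mathrm{hol}(\gamma)\circ\mathrm{dev}$ for every deck transformation $\gamma\in\Gamma$.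 The image $\mathrm{hol}(\Gamma)$ is the holonomy group. A closed affine manifold is called complete if $\mathrm{dev}$ is a covering map onto $\mathbb{A}^m$ (equivalently, a diffeomorphism onto $\mathbb{A}^m$). *)

theory Defs
  imports "HOL-Analysis.Analysis"
begin

definition aff_auto :: "(real^'n \<Rightarrow> real^'n) \<Rightarrow> bool" where
  "aff_auto f \<longleftrightarrow> (\<exists>(A::real^'n^'n) b. invertible A \<and> f = (\<lambda>x. A *v x + b))"

definition affine_line :: "(real^'n) set \<Rightarrow> bool" where
  "affine_line l \<longleftrightarrow> (\<exists>a v. v \<noteq> 0 \<and> l = {a + t *\<^sub>R v | t. True})"

definition line_stabilizer :: "(real^'n) set \<Rightarrow> (real^'n \<Rightarrow> real^'n) set" where
  "line_stabilizer l = {f. aff_auto f \<and> f ` l = l}"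

definition affine_atlas :: "('m::topological_space set \<times> ('m \<Rightarrow> real^'n)) set \<Rightarrow> bool" where
  "affine_atlas atlas \<longleftrightarrow>
     (\<forall>(U,\<phi>)\<in>atlas. open U \<and> open (\<phi> ` U) \<and> (\<exists>\<psi>. homeomorphism U (\<phi> ` U) \<phi> \<psi>)) \<and>
     \<Union>(fst ` atlas) = UNIV \<and>
     (\<forall>(U,\<phi>)\<in>atlas. \<forall>(V,\<psi>)\<in>atlas. \<forall>C \<in> components (U \<inter> V).
        \<exists>f. aff_auto f \<and> (\<forall>x\<in>C. \<psi> x = f (\<phi> x)))"

text \<open>A closed manifold: compact, Hausdorff, second countable (the charts of an atlas
  make it locally Euclidean).\<close>
definition closed_manifold_space :: "'m::topological_space itself \<Rightarrow> bool" where
  "closed_manifold_space _ \<longleftrightarrow>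
     compact (UNIV::'m set) \<and>
     (\<forall>x y::'m. x \<noteq> y \<longrightarrow> (\<exists>U V. open U \<and> open V \<and> x \<in> U \<and> y \<in> V \<and> U \<inter> V = {})) \<and>
     (\<exists>B::'m set set. countable B \<and> topological_basis B)"

text \<open>A developing covering for a complete affine structure: a covering map
  p : real^'n \<rightarrow> M which in every chart is locally an affine automorphism.
  (For a complete structure, p = \<pi> \<circ> dev^{-1}, with \<pi> the universal covering.)\<close>
definition complete_developing_cover ::
  "('m::topological_space set \<times> ('m \<Rightarrow> real^'n)) set \<Rightarrow> (real^'n \<Rightarrow> 'm) \<Rightarrow> bool" where
  "complete_developing_cover atlas p \<longleftrightarrow>
     covering_space UNIV p UNIV \<and>
     (\<forall>(U,\<phi>)\<in>atlas. \<forall>x. p x \<in> U \<longrightarrow>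
        (\<exists>W. open W \<and> x \<in> W \<and> p ` W \<subseteq> U \<and>
             (\<exists>f. aff_auto f \<and> (\<forall>y\<in>W. \<phi> (p y) = f y))))"

text \<open>The holonomy group = the deck transformation group of the developing cover p
  (identified with \<pi>_1(M) acting on the universal cover via dev).\<close>
definition holonomy_group :: "(real^'n \<Rightarrow> 'm::topological_space) \<Rightarrow> (real^'n \<Rightarrow> real^'n) set" where
  "holonomy_group p = {g. (\<exists>h. homeomorphism UNIV UNIV g h) \<and> p \<circ> g = p}"

end

theory Submission
  imports Defs
begin


locale deckcov =
  fixes p :: "'a::euclidean_space \<Rightarrow> 'm::topological_space"
  assumes cov: "covering_space UNIV p UNIV"
begin

lemma p_cont: "continuous_on UNIV p"
  using cov covering_space_imp_continuous by blast

lemma pullback_cov: "covering_space {z. p (fst z) = p (snd z)} fst UNIV"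
proof (rule covering_spaceI)
  let ?C = "{z::'a\<times>'a. p (fst z) = p (snd z)}"
  show "continuous_on ?C fst" by (intro continuous_intros)
  show "fst ` ?C = UNIV"
  proof (safe)
    fix x :: 'a show "x \<in> fst ` ?C" by (rule image_eqI[of _ _ "(x,x)"]) auto
  qed auto
  fix x :: 'a
  obtain T v where xT: "p x \<in> T" and oT: "openin (top_of_set UNIV) T"
    and vU: "\<Union>v = UNIV \<inter> p -` T" and vo: "\<forall>u\<in>v. openin (top_of_set UNIV) u"
    and vd: "pairwise disjnt v" and vh: "\<forall>u\<in>v. \<exists>q. homeomorphism u T p q"
    using cov unfolding covering_space_def by (metis UNIV_I)
  obtain u0 where u0: "u0 \<in> v" "x \<in> u0" using vU xT by blast
  obtain q0 where q0: "homeomorphism u0 T p q0" using vh u0 by blast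
  have ou0: "open u0" using vo u0 by simp
  have pu0: "p ` u0 = T" using q0 by (simp add: homeomorphism_def)
  define f where "f u = ?C \<inter> (u0 \<times> u)" for u
  show "\<exists>T. x \<in> T \<and> openin (top_of_set UNIV) T \<and>
             (\<exists>v. \<Union>v = ?C \<inter> fst -` T \<and> (\<forall>u \<in> v. openin (top_of_set ?C) u) \<and>
                  pairwise disjnt v \<and> (\<forall>u \<in> v. \<exists>q. homeomorphism u T fst q))"
  proof (intro exI conjI)
    show "x \<in> u0" by fact
    show "openin (top_of_set UNIV) u0" using ou0 by simp
    show "\<Union>(f ` v) = ?C \<inter> fst -` u0"
    proof
      show "\<Union>(f ` v) \<subseteq> ?C \<inter> fst -` u0" by (auto simp: f_def)
      show "?C \<inter> fst -` u0 \<subseteq> \<Union>(f ` v)"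
      proof clarify
        fix w y assume "p (fst (w,y)) = p (snd (w,y))" "fst (w,y) \<in> u0"
        then have "p w = p y" "w \<in> u0" by auto
        then have "p y \<in> T" using pu0 by (metis imageI)
        then obtain u where "u \<in> v" "y \<in> u" using vU by blast
        then show "(w,y) \<in> \<Union>(f ` v)" using \<open>p w = p y\<close> \<open>w \<in> u0\<close> by (auto simp: f_def)
      qed
    qed
    show "\<forall>u\<in>f ` v. openin (top_of_set ?C) u"
    proof
      fix u assume "u \<in> f ` v"
      then obtain u1 where "u1 \<in> v" "u = f u1" by blast
      then have "open (u0 \<times> u1)" using vo ou0 by (simp add: open_Times)
      then show "openin (top_of_set ?C) u" using \<open>u = f u1\<close> unfolding f_def
        by (metis Int_commute openin_open_Int)
    qed
    show "pairwise disjnt (f ` v)"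
      unfolding pairwise_def
    proof clarify
      fix u1 u2 assume "u1 \<in> v" "u2 \<in> v" "f u1 \<noteq> f u2"
      then have "u1 \<noteq> u2" by blast
      then have "disjnt u1 u2" using vd \<open>u1 \<in> v\<close> \<open>u2 \<in> v\<close> by (simp add: pairwise_def)
      then show "disjnt (f u1) (f u2)" by (auto simp: f_def disjnt_def)
    qed
    show "\<forall>u\<in>f ` v. \<exists>q. homeomorphism u u0 fst q"
    proof
      fix u assume "u \<in> f ` v"
      then obtain u1 where u1: "u1 \<in> v" "u = f u1" by blast
      obtain q1 where q1: "homeomorphism u1 T p q1" using vh u1 by blast
      have "homeomorphism u u0 fst (\<lambda>w. (w, q1 (p w)))"
      proof (rule homeomorphismI)
        show "continuous_on u fst" by (intro continuous_intros)
        have "continuous_on u0 p" using p_cont continuous_on_subset by blast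
        moreover have "continuous_on T q1" using q1 by (simp add: homeomorphism_def)
        ultimately have "continuous_on u0 (q1 \<circ> p)" using pu0
          by (intro continuous_on_compose) auto
        then show "continuous_on u0 (\<lambda>w. (w, q1 (p w)))"
          by (intro continuous_intros) (simp add: o_def)
        show "fst ` u \<subseteq> u0" using u1 by (auto simp: f_def)
        show "(\<lambda>w. (w, q1 (p w))) ` u0 \<subseteq> u"
        proof clarify
          fix w assume "w \<in> u0"
          then have "p w \<in> T" using pu0 by auto
          then have "q1 (p w) \<in> u1" "p (q1 (p w)) = p w" using q1 u1 unfolding homeomorphism_def
            by auto
          then show "(w, q1 (p w)) \<in> u" using \<open>w \<in> u0\<close> u1 \<open>p w \<in> T\<close> q1
            unfolding homeomorphism_def f_def by auto
        qed
        show "\<And>z. z \<in> u \<Longrightarrow> (fst z, q1 (p (fst z))) = z"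
        proof -
          fix z assume "z \<in> u"
          then obtain w y where z: "z = (w,y)" "p w = p y" "y \<in> u1" using u1 by (auto simp: f_def)
          then have "q1 (p y) = y" using q1 by (simp add: homeomorphism_def)
          then show "(fst z, q1 (p (fst z))) = z" using z by simp
        qed
        show "\<And>y. y \<in> u0 \<Longrightarrow> fst (y, q1 (p y)) = y" by simp
      qed
      then show "\<exists>q. homeomorphism u u0 fst q" by blast
    qed
  qed
qed

end


context deckcov begin

lemma lift_exists:
  assumes "p x = p y"
  obtains g where "continuous_on UNIV g" "g x = y" "\<And>w. p (g w) = p w"
proof -
  obtain s where s: "continuous_on UNIV s" "s \<in> UNIV \<rightarrow> {z. p (fst z) = p (snd z)}"
    "s x = (x,y)" "\<And>w. w \<in> UNIV \<Longrightarrow> fst (s w) = id w"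
  proof (rule covering_space_lift_strong[OF pullback_cov, of "(x,y)" x UNIV id])
    show "(x, y) \<in> {z. p (fst z) = p (snd z)}" using assms by simp
    show "simply_connected (UNIV :: 'a set)" by (rule convex_imp_simply_connected[OF convex_UNIV])
  qed (auto simp: locally_path_connected_UNIV continuous_on_id)
  show ?thesis
  proof (rule that[of "snd \<circ> s"])
    show "continuous_on UNIV (snd \<circ> s)" using s(1) by (intro continuous_on_compose continuous_intros)
    show "(snd \<circ> s) x = y" using s(3) by simp
    fix w
    have "p (fst (s w)) = p (snd (s w))" using s(2) by auto
    then show "p ((snd \<circ> s) w) = p w" using s(4)[of w] by simp
  qed
qed

lemma lift_unique:
  assumes "continuous_on UNIV g1" "continuous_on UNIV g2"
    "\<And>w. p (g1 w) = p w" "\<And>w. p (g2 w) = p w" "g1 a = g2 a"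
  shows "g1 z = g2 z"
  by (rule covering_space_lift_unique[OF cov, of g1 a g2 UNIV p z]) (use assms p_cont in auto)

end

locale deckvec = deckcov p for p :: "real^'n::finite \<Rightarrow> 'm::topological_space"
begin

definition Gam where "Gam = holonomy_group p"

lemma Gam_iff: "g \<in> Gam \<longleftrightarrow> (\<exists>h. homeomorphism UNIV UNIV g h) \<and> (\<forall>w. p (g w) = p w)"
  by (auto simp: Gam_def holonomy_group_def fun_eq_iff)

lemma Gam_cont: "g \<in> Gam \<Longrightarrow> continuous_on UNIV g"
  by (auto simp: Gam_iff homeomorphism_def)

lemma Gam_p: "g \<in> Gam \<Longrightarrow> p (g w) = p w"
  by (auto simp: Gam_iff)

lemma Gam_fix: assumes "g \<in> Gam" "g x = x" shows "g z = z"
  using lift_unique[of g id x z] assms Gam_cont Gam_p by (auto simp: continuous_on_id)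

lemma Gam_inv: assumes "g \<in> Gam"
  obtains h where "h \<in> Gam" "\<And>x. h (g x) = x" "\<And>x. g (h x) = x"
proof -
  obtain h where h: "homeomorphism UNIV UNIV g h" using assms unfolding Gam_iff by blast
  then have h': "homeomorphism UNIV UNIV h g" by (rule homeomorphism_symD)
  have gh: "g (h x) = x" "h (g x) = x" for x using h unfolding homeomorphism_def by auto
  have "p (h w) = p w" for w
    using Gam_p[OF assms, of "h w"] gh(1)[of w] by simp
  then have "h \<in> Gam" using h' unfolding Gam_iff by blast
  then show ?thesis using that gh by blast
qed

lemma Gam_comp: assumes "g \<in> Gam" "h \<in> Gam" shows "g \<circ> h \<in> Gam"
proof -
  obtain g' h' where "homeomorphism UNIV UNIV g g'" "homeomorphism UNIV UNIV h h'"
    using assms Gam_iff by blast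
  then have "homeomorphism UNIV UNIV (g \<circ> h) (h' \<circ> g')"
    using homeomorphism_compose by blast
  moreover have "\<forall>w. p ((g \<circ> h) w) = p w" using Gam_p[OF assms(1)] Gam_p[OF assms(2)] by simp
  ultimately show ?thesis unfolding Gam_iff by blast
qed

lemma Gam_trans: assumes "p x = p y" obtains g where "g \<in> Gam" "g x = y"
proof -
  obtain g where g: "continuous_on UNIV g" "g x = y" "\<And>w. p (g w) = p w"
    using lift_exists assms by blast
  obtain h where h: "continuous_on UNIV h" "h y = x" "\<And>w. p (h w) = p w"
    using lift_exists assms by metis
  have hg: "h (g z) = z" for z
    using lift_unique[of "h \<circ> g" id x z] g h
    by (auto simp: continuous_on_id intro: continuous_on_compose2[of UNIV h])
  have gh: "g (h z) = z" for z
    using lift_unique[of "g \<circ> h" id y z] g h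
    by (auto simp: continuous_on_id intro: continuous_on_compose2[of UNIV g])
  have "homeomorphism UNIV UNIV g h"
    by (rule homeomorphismI) (use g h hg gh in auto)
  then have "g \<in> Gam" using g Gam_iff by blast
  then show ?thesis using that g by blast
qed

end



context deckvec begin

lemma p_open_ball: "open (p ` ball 0 r)"
proof -
  have "\<exists>U. open U \<and> y \<in> U \<and> U \<subseteq> p ` ball 0 r" if yin: "y \<in> p ` ball 0 r" for y
  proof -
    obtain x where x: "x \<in> ball 0 r" "y = p x" using yin by blast
    obtain T u q where Tu: "x \<in> T" "openin (top_of_set UNIV) T" "p x \<in> u"
      "openin (top_of_set UNIV) u" "homeomorphism T u p q"
      using covering_space_local_homeomorphism[OF cov, of x] by blast
    have oT: "open T" and ou: "open u" using Tu by auto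
    have qc: "continuous_on u q" using Tu(5) by (simp add: homeomorphism_def)
    define T' where "T' = T \<inter> ball 0 r"
    have "open T'" using oT by (simp add: T'_def open_Int)
    then have o: "open (q -` T' \<inter> u)" using qc ou continuous_on_open_vimage by blast
    have "p x \<in> q -` T' \<inter> u" using Tu x by (auto simp: T'_def homeomorphism_def)
    moreover have "q -` T' \<inter> u \<subseteq> p ` ball 0 r"
    proof
      fix z assume z: "z \<in> q -` T' \<inter> u"
      then have "p (q z) = z" using Tu(5) by (simp add: homeomorphism_def)
      then show "z \<in> p ` ball 0 r" using z by (metis IntD1 IntD2 T'_def image_eqI vimageE)
    qed
    ultimately show ?thesis using o x by blast
  qed
  then show ?thesis by (metis open_subopen)
qed

lemma ball_onto:
  assumes "compact (UNIV :: 'm set)"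
  obtains R where "p ` ball 0 R = UNIV" "R \<ge> 0"
proof -
  have sur: "p ` UNIV = UNIV" using cov covering_space_imp_surjective by blast
  have "UNIV \<subseteq> (\<Union>k\<in>(UNIV::nat set). p ` ball 0 (real k))"
  proof
    fix y :: 'm
    obtain x where "y = p x" using sur by blast
    moreover obtain k :: nat where "norm x < real k" using reals_Archimedean2 by blast
    ultimately show "y \<in> (\<Union>k. p ` ball 0 (real k))" by (intro UN_I[of k]) auto
  qed
  then obtain C where C: "finite C" "UNIV \<subseteq> (\<Union>k\<in>C. p ` ball 0 (real k))"
    using compactE_image[OF assms, of UNIV "\<lambda>k. p ` ball 0 (real k)"] p_open_ball by metis
  define R where "R = real (Max (insert 0 C))"
  have "p ` ball 0 (real k) \<subseteq> p ` ball 0 R" if "k \<in> C" for k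
  proof -
    have "k \<le> Max (insert 0 C)" using C(1) that by simp
    then have "ball 0 (real k) \<subseteq> ball (0::real^'n) R" by (auto simp: R_def)
    then show ?thesis by blast
  qed
  then have "p ` ball 0 R = UNIV" using C(2) by blast
  then show ?thesis using that R_def by simp
qed

lemma local_free:
  obtains W where "open W" "x \<in> W" "\<And>f w z. f \<in> Gam \<Longrightarrow> w \<in> W \<Longrightarrow> f w \<in> W \<Longrightarrow> f z = z"
proof -
  obtain T v where xT: "p x \<in> T" and oT: "openin (top_of_set UNIV) T"
    and vU: "\<Union>v = UNIV \<inter> p -` T" and vo: "\<forall>u\<in>v. openin (top_of_set UNIV) u"
    and vd: "pairwise disjnt v" and vh: "\<forall>u\<in>v. \<exists>q. homeomorphism u T p q"
    using cov unfolding covering_space_def by (metis UNIV_I)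
  obtain u0 where u0: "u0 \<in> v" "x \<in> u0" using vU xT by blast
  obtain q0 where q0: "homeomorphism u0 T p q0" using vh u0 by blast
  have ou0: "open u0" using vo u0 by simp
  have pu0: "p ` u0 = T" and qp: "\<And>z. z \<in> u0 \<Longrightarrow> q0 (p z) = z"
    using q0 by (auto simp: homeomorphism_def)
  obtain e where e: "e > 0" "ball x e \<subseteq> u0" using ou0 u0 open_contains_ball by blast
  show ?thesis
  proof (rule that[of "ball x e"])
    show "open (ball x e)" by simp
    show "x \<in> ball x e" using e by simp
    fix f w z assume f: "f \<in> Gam" and w: "w \<in> ball x e" "f w \<in> ball x e"
    define S where "S = f ` ball x e"
    have "connected S" unfolding S_def
      by (rule connected_continuous_image[OF continuous_on_subset[OF Gam_cont[OF f]]]) auto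
    define B where "B = \<Union>(v - {u0})"
    have oB: "open B" using vo by (auto simp: B_def)
    have dB: "u0 \<inter> B = {}" using vd u0 by (auto simp: B_def pairwise_def disjnt_def)
    have SU: "S \<subseteq> u0 \<union> B"
    proof
      fix s assume "s \<in> S"
      then obtain w' where w': "w' \<in> ball x e" "s = f w'" by (auto simp: S_def)
      then have "p s = p w'" using Gam_p[OF f] by simp
      then have "p s \<in> T" using w' e pu0 by (metis image_eqI subsetD)
      then have "s \<in> \<Union>v" using vU by simp
      then show "s \<in> u0 \<union> B" by (auto simp: B_def)
    qed
    have "f w \<in> u0 \<inter> S" using w e by (auto simp: S_def)
    then have "u0 \<inter> S \<noteq> {}" by blast
    then have "B \<inter> S = {}" using connectedD[OF \<open>connected S\<close> ou0 oB] dB SU by blast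
    moreover have "f w \<in> S" using w(1) unfolding S_def by (rule imageI)
    ultimately have "f w \<in> u0" using SU by blast
    moreover have "w \<in> u0" using w e by blast
    moreover have "p (f w) = p w" using Gam_p[OF f] by simp
    ultimately have "f w = w" using qp by metis
    then show "f z = z" using Gam_fix[OF f] by blast
  qed
qed

lemma pair_nbhd:
  assumes haus: "\<forall>x y::'m. x \<noteq> y \<longrightarrow> (\<exists>U V. open U \<and> open V \<and> x \<in> U \<and> y \<in> V \<and> U \<inter> V = {})"
  shows "\<exists>Nx Ny h. open Nx \<and> open Ny \<and> x \<in> Nx \<and> y \<in> Ny \<and>
            (\<forall>g\<in>Gam. (\<exists>x'\<in>Nx. g x' \<in> Ny) \<longrightarrow> g = h)"
proof (cases "p x = p y")
  case True
  obtain h where h: "h \<in> Gam" "h x = y" using Gam_trans[OF True] by blast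
  obtain hi where hi: "hi \<in> Gam" "\<And>z. hi (h z) = z" "\<And>z. h (hi z) = z" using Gam_inv[OF h(1)] by blast
  obtain W where W: "open W" "x \<in> W" "\<And>f w z. f \<in> Gam \<Longrightarrow> w \<in> W \<Longrightarrow> f w \<in> W \<Longrightarrow> f z = z"
    using local_free by blast
  obtain h' where hh: "homeomorphism UNIV UNIV h h'" using h(1) unfolding Gam_iff by blast
  have "openin (top_of_set UNIV) (h ` W)"
    by (rule homeomorphism_imp_open_map[OF hh]) (use W in simp)
  then have oh: "open (h ` W)" by simp
  have "\<forall>g\<in>Gam. (\<exists>x'\<in>W. g x' \<in> h ` W) \<longrightarrow> g = h"
  proof (intro ballI impI)
    fix g assume g: "g \<in> Gam" and "\<exists>x'\<in>W. g x' \<in> h ` W"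
    then obtain x' w'' where xw: "x' \<in> W" "w'' \<in> W" "g x' = h w''" by blast
    have f: "hi \<circ> g \<in> Gam" using Gam_comp[OF hi(1) g] .
    have "(hi \<circ> g) x' = w''" using xw hi by simp
    then have "(hi \<circ> g) z = z" for z using W(3)[OF f xw(1)] xw by simp
    then have "g z = h z" for z using hi(3)[of "g z"] by simp
    then show "g = h" by blast
  qed
  then show ?thesis using W(1,2) oh h(2) by (intro exI[of _ W] exI[of _ "h ` W"] exI[of _ h]) auto
next
  case False
  then obtain U V where UV: "open U" "open V" "p x \<in> U" "p y \<in> V" "U \<inter> V = {}"
    using haus by metis
  have "open (p -` U)" "open (p -` V)" using p_cont UV continuous_on_open_vimage[of UNIV p] by auto
  moreover have "\<forall>g\<in>Gam. (\<exists>x'\<in>p -` U. g x' \<in> p -` V) \<longrightarrow> g = id"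
  proof (intro ballI impI)
    fix g assume g: "g \<in> Gam" and "\<exists>x'\<in>p -` U. g x' \<in> p -` V"
    then obtain x' where "p x' \<in> U" "p (g x') \<in> V" by blast
    then show "g = id" using Gam_p[OF g, of x'] UV(5) by auto
  qed
  ultimately show ?thesis using UV(3,4) by (intro exI[of _ "p -` U"] exI[of _ "p -` V"] exI[of _ id]) auto
qed

lemma finite_hit:
  assumes haus: "\<forall>x y::'m. x \<noteq> y \<longrightarrow> (\<exists>U V. open U \<and> open V \<and> x \<in> U \<and> y \<in> V \<and> U \<inter> V = {})"
  shows "finite {g\<in>Gam. \<exists>k\<in>cball 0 r. g k \<in> cball 0 r}"
proof -
  obtain NX NY H where N: "\<And>z. open (NX z) \<and> open (NY z) \<and> fst z \<in> NX z \<and> snd z \<in> NY z \<and>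
            (\<forall>g\<in>Gam. (\<exists>x'\<in>NX z. g x' \<in> NY z) \<longrightarrow> g = H z)"
  proof -
    have "\<forall>z. \<exists>t. open (fst t) \<and> open (fst (snd t)) \<and> fst z \<in> fst t \<and> snd z \<in> fst (snd t) \<and>
            (\<forall>g\<in>Gam. (\<exists>x'\<in>fst t. g x' \<in> fst (snd t)) \<longrightarrow> g = snd (snd t))"
    proof
      fix z :: "(real^'n) \<times> (real^'n)"
      obtain Nx Ny h where "open Nx \<and> open Ny \<and> fst z \<in> Nx \<and> snd z \<in> Ny \<and>
            (\<forall>g\<in>Gam. (\<exists>x'\<in>Nx. g x' \<in> Ny) \<longrightarrow> g = h)"
        using pair_nbhd[OF haus, of "fst z" "snd z"] by blast
      then show "\<exists>t. open (fst t) \<and> open (fst (snd t)) \<and> fst z \<in> fst t \<and> snd z \<in> fst (snd t) \<and>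
            (\<forall>g\<in>Gam. (\<exists>x'\<in>fst t. g x' \<in> fst (snd t)) \<longrightarrow> g = snd (snd t))"
        by (intro exI[of _ "(Nx, Ny, h)"]) simp
    qed
    then obtain F where F: "\<forall>z. open (fst (F z)) \<and> open (fst (snd (F z))) \<and> fst z \<in> fst (F z) \<and> snd z \<in> fst (snd (F z)) \<and>
            (\<forall>g\<in>Gam. (\<exists>x'\<in>fst (F z). g x' \<in> fst (snd (F z))) \<longrightarrow> g = snd (snd (F z)))"
      by (rule choice[THEN exE]) blast
    show ?thesis by (rule that[of "\<lambda>z. fst (F z)" "\<lambda>z. fst (snd (F z))" "\<lambda>z. snd (snd (F z))"]) (use F in blast)
  qed
  define K where "K = cball (0::real^'n) r"
  have "compact (K \<times> K)" by (simp add: K_def compact_Times)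
  moreover have "\<And>z. z \<in> K \<times> K \<Longrightarrow> open (NX z \<times> NY z)" using N by (simp add: open_Times)
  moreover have "K \<times> K \<subseteq> (\<Union>z\<in>K \<times> K. NX z \<times> NY z)"
  proof
    fix z assume "z \<in> K \<times> K" then show "z \<in> (\<Union>z\<in>K \<times> K. NX z \<times> NY z)"
      using N[of z] by (intro UN_I[of z]) (auto simp: mem_Times_iff)
  qed
  ultimately obtain C where C: "C \<subseteq> K \<times> K" "finite C" "K \<times> K \<subseteq> (\<Union>z\<in>C. NX z \<times> NY z)"
    by (rule compactE_image)
  have "{g\<in>Gam. \<exists>k\<in>cball 0 r. g k \<in> cball 0 r} \<subseteq> H ` C"
  proof clarify
    fix g k assume g: "g \<in> Gam" "k \<in> cball 0 r" "g k \<in> cball 0 r"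
    then have "(k, g k) \<in> K \<times> K" by (simp add: K_def)
    then obtain z where "z \<in> C" "k \<in> NX z" "g k \<in> NY z" using C(3) by blast
    then show "g \<in> H ` C" using N[of z] g by blast
  qed
  then show ?thesis using C(2) finite_subset by blast
qed

end



locale lineset = deckvec p for p :: "real^'n::finite \<Rightarrow> 'm::topological_space" +
  fixes a v :: "real^'n"
  assumes vnz: "v \<noteq> 0" and hol: "holonomy_group p \<subseteq> line_stabilizer {a + t *\<^sub>R v | t. True}"
begin

lemma aff_shift:
  assumes g: "g \<in> Gam"
  shows "\<exists>d. \<forall>t. g (a + t *\<^sub>R v) = a + (t + d) *\<^sub>R v"
proof -
  have "g \<in> line_stabilizer {a + t *\<^sub>R v | t. True}" using g hol by (auto simp: Gam_def)
  then have aff: "aff_auto g" and im: "g ` {a + t *\<^sub>R v | t. True} = {a + t *\<^sub>R v | t. True}"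
    by (auto simp: line_stabilizer_def)
  obtain A b where Ab: "g = (\<lambda>x. A *v x + b)" using aff by (auto simp: aff_auto_def)
  have "g a \<in> {a + t *\<^sub>R v | t. True}" using im by (metis (mono_tags, lifting) add_0_right image_eqI mem_Collect_eq scale_zero_left)
  then obtain d where d: "g a = a + d *\<^sub>R v" by blast
  have "g (a + v) \<in> {a + t *\<^sub>R v | t. True}" using im
    by (metis (mono_tags, lifting) image_eqI mem_Collect_eq scaleR_one)
  then obtain e where e: "g (a + v) = a + e *\<^sub>R v" by blast
  have Av: "A *v v = (e - d) *\<^sub>R v"
  proof -
    have "g (a + v) - g a = A *v v" using Ab by (simp add: matrix_vector_right_distrib)
    then show ?thesis using d e by (simp add: algebra_simps)
  qed
  have gt: "g (a + t *\<^sub>R v) = a + (d + t * (e - d)) *\<^sub>R v" for t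
  proof -
    have "g (a + t *\<^sub>R v) = g a + t *\<^sub>R (A *v v)" using Ab
      by (simp add: matrix_vector_right_distrib matrix_vector_mult_scaleR)
    then show ?thesis using d Av by (simp add: algebra_simps)
  qed
  have "e - d = 1"
  proof (rule ccontr)
    assume ne: "e - d \<noteq> 1"
    define t0 where "t0 = d / (1 - (e - d))"
    have "d + t0 * (e - d) = t0" using ne unfolding t0_def by (simp add: field_simps)
    then have "g (a + t0 *\<^sub>R v) = a + t0 *\<^sub>R v" using gt by simp
    then have gfix: "g z = z" for z using Gam_fix[OF g] by blast
    have "a + d *\<^sub>R v = a" using d gfix[of a] by simp
    then have "d = 0" using vnz by simp
    moreover have "a + e *\<^sub>R v = a + 1 *\<^sub>R v" using e gfix[of "a + v"] by simp
    then have "e = 1" using vnz by (metis add_left_cancel scaleR_cancel_right)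
    ultimately show False using ne by simp
  qed
  then show ?thesis using gt by (intro exI[of _ d]) (simp add: algebra_simps)
qed

definition D where "D g = (SOME d. \<forall>t. g (a + t *\<^sub>R v) = a + (t + d) *\<^sub>R v)"

lemma D_eq: "g \<in> Gam \<Longrightarrow> g (a + t *\<^sub>R v) = a + (t + D g) *\<^sub>R v"
  using someI_ex[OF aff_shift] unfolding D_def by blast

lemma D_unique:
  assumes "g \<in> Gam" "g (a + t *\<^sub>R v) = a + (t + d) *\<^sub>R v" shows "D g = d"
proof -
  have "a + (t + D g) *\<^sub>R v = a + (t + d) *\<^sub>R v" using assms D_eq by metis
  then have "(t + D g) *\<^sub>R v = (t + d) *\<^sub>R v" by simp
  then show ?thesis using vnz by simp
qed

lemma D_comp: "g \<in> Gam \<Longrightarrow> h \<in> Gam \<Longrightarrow> D (g \<circ> h) = D g + D h"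
proof -
  assume g: "g \<in> Gam" and h: "h \<in> Gam"
  have "(g \<circ> h) (a + 0 *\<^sub>R v) = a + (0 + (D g + D h)) *\<^sub>R v"
    using D_eq[OF h, of 0] D_eq[OF g, of "D h"] by (simp add: add.commute)
  then show ?thesis using D_unique[OF Gam_comp[OF g h]] by blast
qed

lemma D_inv: "g \<in> Gam \<Longrightarrow> h \<in> Gam \<Longrightarrow> (\<And>x. h (g x) = x) \<Longrightarrow> D h = - D g"
proof -
  assume g: "g \<in> Gam" and h: "h \<in> Gam" and hg: "\<And>x. h (g x) = x"
  have "D (h \<circ> g) = 0" using D_unique[OF Gam_comp[OF h g], of 0 0] hg by simp
  then show ?thesis using D_comp[OF h g] by simp
qed

end



context lineset begin

lemma closed_S:
  assumes haus: "\<forall>x y::'m. x \<noteq> y \<longrightarrow> (\<exists>U V. open U \<and> open V \<and> x \<in> U \<and> y \<in> V \<and> U \<inter> V = {})"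
  shows "closed {x. \<exists>g\<in>Gam. P g \<and> x \<in> g ` cball 0 R}"
proof -
  define S where "S = {x. \<exists>g\<in>Gam. P g \<and> x \<in> g ` cball 0 R}"
  have "closure S \<subseteq> S"
  proof
    fix y assume y: "y \<in> closure S"
    define r where "r = max R (norm y + 1)"
    define F where "F = {g\<in>Gam. \<exists>k\<in>cball 0 r. g k \<in> cball 0 r}"
    have fF: "finite F" unfolding F_def by (rule finite_hit[OF haus])
    define Z where "Z = (\<Union>g\<in>{g\<in>F. P g}. g ` cball 0 R)"
    have "compact Z" unfolding Z_def
    proof (rule compact_UN)
      show "finite {g\<in>F. P g}" using fF by simp
      fix g assume "g \<in> {g\<in>F. P g}"
      then have "g \<in> Gam" by (simp add: F_def)
      then have "continuous_on (cball 0 R) g" using Gam_cont continuous_on_subset by blast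
      then show "compact (g ` cball 0 R)" by (rule compact_continuous_image) simp
    qed
    then have cZ: "closed Z" by (rule compact_imp_closed)
    have "ball y 1 \<inter> S \<subseteq> Z"
    proof
      fix x assume "x \<in> ball y 1 \<inter> S"
      then obtain g k where gk: "g \<in> Gam" "P g" "k \<in> cball 0 R" "x = g k" "dist y x < 1"
        by (auto simp: S_def)
      have "norm x \<le> norm y + 1" using gk(5) norm_triangle_ineq2[of x y]
        by (simp add: dist_norm norm_minus_commute)
      moreover have "k \<in> cball 0 r" using gk(3) by (simp add: r_def)
      moreover have "g k \<in> cball 0 r" using \<open>norm x \<le> norm y + 1\<close> gk(4) by (simp add: r_def)
      ultimately have "g \<in> F" using gk(1) unfolding F_def by blast
      then show "x \<in> Z" using gk unfolding Z_def by blast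
    qed
    have "y \<in> ball y 1 \<inter> closure S" using y by simp
    also have "\<dots> \<subseteq> closure (ball y 1 \<inter> S)" by (rule open_Int_closure_subset) simp
    also have "\<dots> \<subseteq> closure Z" by (rule closure_mono) fact
    also have "\<dots> = Z" using cZ by simp
    also have "Z \<subseteq> S" unfolding Z_def S_def F_def by blast
    finally show "y \<in> S" .
  qed
  then show ?thesis unfolding S_def[symmetric] by (simp add: closure_subset_eq)
qed

lemma contra:
  assumes haus: "\<forall>x y::'m. x \<noteq> y \<longrightarrow> (\<exists>U V. open U \<and> open V \<and> x \<in> U \<and> y \<in> V \<and> U \<inter> V = {})"
    and cpt: "compact (UNIV :: 'm set)" and card: "CARD('n) \<ge> 2"
  shows False
proof -
  obtain R where R: "p ` ball 0 R = UNIV" "R \<ge> 0" using ball_onto[OF cpt] by blast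
  define K where "K = cball (0::real^'n) R"
  have cover: "\<exists>g\<in>Gam. x \<in> g ` K" for x
  proof -
    have "p x \<in> p ` ball 0 R" using R by simp
    then obtain k where k: "k \<in> ball 0 R" "p x = p k" by auto
    obtain g where "g \<in> Gam" "g k = x" using Gam_trans[of k x] k by metis
    then show ?thesis using k unfolding K_def by force
  qed
  have nv: "norm v > 0" using vnz by simp
  define c where "c = (R + norm a) / norm v"
  have near: "\<exists>g\<in>Gam. a + t *\<^sub>R v \<in> g ` K \<and> \<bar>D g - t\<bar> \<le> c" for t
  proof -
    obtain g where g: "g \<in> Gam" "a + t *\<^sub>R v \<in> g ` K" using cover by blast
    then obtain k where k: "k \<in> K" "g k = a + t *\<^sub>R v" by (metis imageE)
    obtain hi where hi: "hi \<in> Gam" "\<And>z. hi (g z) = z" "\<And>z. g (hi z) = z" using Gam_inv[OF g(1)] by blast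
    have "hi (a + t *\<^sub>R v) = k" using k hi by metis
    then have "a + (t + D hi) *\<^sub>R v = k" using D_eq[OF hi(1)] by simp
    then have "(t + D hi) *\<^sub>R v = k - a" by (simp add: algebra_simps)
    then have "\<bar>t + D hi\<bar> * norm v = norm (k - a)" by (metis norm_scaleR)
    also have "\<dots> \<le> norm k + norm a" by (rule norm_triangle_ineq4)
    also have "\<dots> \<le> R + norm a" using k(1) by (simp add: K_def)
    finally have "\<bar>t + D hi\<bar> \<le> c" using nv by (simp add: c_def field_simps)
    moreover have "D hi = - D g" using D_inv[OF g(1) hi(1) hi(2)] .
    ultimately have "\<bar>D g - t\<bar> \<le> c" by simp
    then show ?thesis using g by blast
  qed
  define N0 where "N0 = {g\<in>Gam. \<exists>k\<in>K. g k \<in> K}"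
  have fN0: "finite N0" unfolding N0_def K_def by (rule finite_hit[OF haus])
  define M0 where "M0 = (\<Sum>g\<in>N0. \<bar>D g\<bar>)"
  have M0: "\<bar>D g\<bar> \<le> M0" if "g \<in> N0" for g
    unfolding M0_def by (rule member_le_sum) (use that fN0 in auto)
  have close: "\<bar>D g - D h\<bar> \<le> M0" if gh: "g \<in> Gam" "h \<in> Gam" "x \<in> g ` K" "x \<in> h ` K" for g h x
  proof -
    obtain k1 where k1: "k1 \<in> K" "g k1 = x" using gh(3) by (metis imageE)
    obtain k2 where k2: "k2 \<in> K" "h k2 = x" using gh(4) by (metis imageE)
    obtain hi where hi: "hi \<in> Gam" "\<And>z. hi (h z) = z" "\<And>z. h (hi z) = z" using Gam_inv[OF gh(2)] by blast
    have f: "hi \<circ> g \<in> Gam" using Gam_comp[OF hi(1) gh(1)] .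
    have "(hi \<circ> g) k1 = k2" using k1(2) k2(2) hi(2)[of k2] by simp
    then have "hi \<circ> g \<in> N0" using f k1(1) k2(1) unfolding N0_def by (metis (mono_tags, lifting) mem_Collect_eq)
    then have "\<bar>D (hi \<circ> g)\<bar> \<le> M0" by (rule M0)
    moreover have "D (hi \<circ> g) = D hi + D g" by (rule D_comp[OF hi(1) gh(1)])
    moreover have "D hi = - D h" by (rule D_inv[OF gh(2) hi(1) hi(2)])
    ultimately show ?thesis by (simp add: abs_minus_commute)
  qed
  have M0pos: "M0 \<ge> 0" unfolding M0_def by (rule sum_nonneg) simp
  define T where "T = M0 + 1"
  define Sp where "Sp = {x. \<exists>g\<in>Gam. (\<lambda>g. D g > T) g \<and> x \<in> g ` cball 0 R}"
  define Sm where "Sm = {x. \<exists>g\<in>Gam. (\<lambda>g. D g < - T) g \<and> x \<in> g ` cball 0 R}"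
  have cSp: "closed Sp" unfolding Sp_def using closed_S[OF haus, of "\<lambda>g. D g > T" R] by simp
  have cSm: "closed Sm" unfolding Sm_def using closed_S[OF haus, of "\<lambda>g. D g < - T" R] by simp
  have disj: "Sp \<inter> Sm = {}"
  proof (rule ccontr)
    assume "Sp \<inter> Sm \<noteq> {}"
    then obtain x where "x \<in> Sp" "x \<in> Sm" by blast
    then obtain g h where gh: "g \<in> Gam" "h \<in> Gam" "D g > T" "D h < -T" "x \<in> g ` K" "x \<in> h ` K"
      unfolding Sp_def Sm_def K_def by blast
    have "\<bar>D g - D h\<bar> \<le> M0" by (rule close[OF gh(1,2,5,6)])
    then show False using gh(3,4) T_def M0pos by linarith
  qed
  define r where "r = max R (norm a + T * norm v)"
  define Bset where "Bset = {g\<in>Gam. \<bar>D g\<bar> \<le> T}"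
  have "Bset \<subseteq> {g\<in>Gam. \<exists>k\<in>cball 0 r. g k \<in> cball 0 r}"
  proof clarify
    fix g assume g: "g \<in> Bset"
    then have gG: "g \<in> Gam" and dg: "\<bar>D g\<bar> \<le> T" by (auto simp: Bset_def)
    have "g a = a + D g *\<^sub>R v" using D_eq[OF gG, of 0] by simp
    then have "norm (g a) \<le> norm a + \<bar>D g\<bar> * norm v" by (metis norm_scaleR norm_triangle_ineq)
    also have "\<dots> \<le> norm a + T * norm v" using dg by (simp add: mult_right_mono)
    finally have "g a \<in> cball 0 r" by (simp add: r_def)
    moreover have "norm a \<le> r" using nv M0pos unfolding r_def T_def
      by (smt (verit, ccfv_SIG) mult_nonneg_nonneg norm_ge_zero)
    then have "a \<in> cball 0 r" by simp
    ultimately show "g \<in> Gam \<and> (\<exists>k\<in>cball 0 r. g k \<in> cball 0 r)" using gG by blast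
  qed
  then have fB: "finite Bset" using finite_hit[OF haus, of r] finite_subset by blast
  define Bbig where "Bbig = (\<Union>g\<in>Bset. g ` K)"
  have "compact Bbig" unfolding Bbig_def
  proof (rule compact_UN[OF fB])
    fix g assume "g \<in> Bset"
    then have "g \<in> Gam" by (simp add: Bset_def)
    then have "continuous_on K g" using Gam_cont continuous_on_subset by blast
    then show "compact (g ` K)" by (rule compact_continuous_image) (simp add: K_def)
  qed
  then have "bounded Bbig" by (rule compact_imp_bounded)
  then obtain B0 where B0: "\<forall>x\<in>Bbig. norm x \<le> B0" unfolding bounded_iff by blast
  define rho where "rho = max B0 0"
  have rho: "Bbig \<subseteq> cball 0 rho" "rho \<ge> 0" using B0 by (auto simp: rho_def)
  have out: "- cball 0 rho \<subseteq> Sp \<union> Sm"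
  proof
    fix x :: "real^'n" assume x: "x \<in> - cball 0 rho"
    obtain g where g: "g \<in> Gam" "x \<in> g ` K" using cover by blast
    have "\<not> \<bar>D g\<bar> \<le> T"
    proof
      assume "\<bar>D g\<bar> \<le> T"
      then have "x \<in> Bbig" using g unfolding Bbig_def Bset_def by blast
      then show False using rho x by blast
    qed
    then show "x \<in> Sp \<union> Sm" using g unfolding Sp_def Sm_def K_def by force
  qed
  define t1 where "t1 = (rho + norm a + 1) / norm v + T + c + 1"
  have c0: "c \<ge> 0" using R(2) nv by (simp add: c_def)
  have T0: "T \<ge> 0" using M0pos by (simp add: T_def)
  have far: "a + t *\<^sub>R v \<in> - cball 0 rho" if "\<bar>t\<bar> \<ge> (rho + norm a + 1) / norm v" for t
  proof -
    have "\<bar>t\<bar> * norm v \<ge> rho + norm a + 1" using that nv by (simp add: field_simps)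
    moreover have "norm (t *\<^sub>R v) \<le> norm (a + t *\<^sub>R v) + norm a"
      by (metis add.commute add_diff_cancel_left' norm_triangle_ineq4 add.left_commute)
    ultimately have "norm (a + t *\<^sub>R v) > rho" by simp
    then show ?thesis by simp
  qed
  have t1big: "t1 \<ge> (rho + norm a + 1) / norm v" using T0 c0 by (simp add: t1_def)
  obtain g1 where g1: "g1 \<in> Gam" "a + t1 *\<^sub>R v \<in> g1 ` K" "\<bar>D g1 - t1\<bar> \<le> c" using near by blast
  obtain g2 where g2: "g2 \<in> Gam" "a + (-t1) *\<^sub>R v \<in> g2 ` K" "\<bar>D g2 - (-t1)\<bar> \<le> c" using near by blast
  have "(rho + norm a + 1) / norm v \<ge> 0" using rho nv by simp
  then have "D g1 > T" "D g2 < -T" using g1(3) g2(3) by (auto simp: t1_def)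
  then have in1: "a + t1 *\<^sub>R v \<in> Sp \<inter> - cball 0 rho" and in2: "a + (-t1) *\<^sub>R v \<in> Sm \<inter> - cball 0 rho"
    using g1 g2 far[of t1] far[of "-t1"] t1big unfolding Sp_def Sm_def K_def by auto
  have "connected (- cball (0::real^'n) rho)"
    by (rule connected_complement_bounded_convex) (use card in auto)
  then show False
    unfolding connected_closed using cSp cSm out disj in1 in2 by blast
qed

end

theorem theorem1:
  fixes atlas :: "('m::topological_space set \<times> ('m \<Rightarrow> real^'n::finite)) set"
    and p :: "real^'n \<Rightarrow> 'm"
    and l :: "(real^'n) set"
  assumes "CARD('n) \<ge> 2"
    and "closed_manifold_space TYPE('m)"
    and "affine_atlas atlas"
    and "complete_developing_cover atlas p"
    and "affine_line l"
    and "holonomy_group p \<subseteq> line_stabilizer l"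
  shows False
proof -
  have cpt: "compact (UNIV :: 'm set)"
    and haus: "\<forall>x y::'m. x \<noteq> y \<longrightarrow> (\<exists>U V. open U \<and> open V \<and> x \<in> U \<and> y \<in> V \<and> U \<inter> V = {})"
    using assms(2) unfolding closed_manifold_space_def by blast+
  have cov: "covering_space UNIV p UNIV"
    using assms(4) unfolding complete_developing_cover_def by blast
  obtain a v where av: "v \<noteq> 0" "l = {a + t *\<^sub>R v | t. True}"
    using assms(5) unfolding affine_line_def by blast
  interpret L: lineset p a v
  proof unfold_locales
    show "covering_space UNIV p UNIV" by (rule cov)
    show "v \<noteq> 0" by (rule av(1))
    show "holonomy_group p \<subseteq> line_stabilizer {a + t *\<^sub>R v | t. True}" using assms(6) av(2) by simp
  qed
  show False by (rule L.contra[OF haus cpt assms(1)])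
qed

end
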